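(* Let $N\ge 2$ and let $\hat{\mu}^A=(\hat\mu^A_1,\dots,\hat\mu^A_N)$ and $\hat{\mu}^B=(\hat\mu^B_1,\dots,\hat\mu^B_N)$ be real-valued random vectors (with finite expectations). For $1\le K\le N$ let $\mathcal{M}_K$ be the set of indices corresponding to the $K$ largest values of $\hat{\mu}^B$, and let $a_K^*\in\mathcal{M}_K$ be an index with $\hat{\mu}^A_{a_K^*}=\max_{i\in\mathcal{M}_K}\hat{\mu}^A_i$ (ties broken uniformly at random). Then for every $1\le K<N$, $$\mathbb{E}\left[\hat{\mu}^B_{a_K^*}\right]\ \ge\ \mathbb{E}\left[\hat{\mu}^B_{a_{K+1}^*}\right],$$ i.e. as $K$ decreases the underestimation decays monotonically.
   Context: In the paper, $\hat\mu^A_i$ and $\hat\mu^B_i$ are sample-average estimators of $\mathbb{E}[X_i]$ for independent random variables $X_1,\dots,X_N$, computed from two disjoint random halves $S^A,S^B$ of a sample set $S=\bigcup_i S_i$, where $S_i$ consists of i.i.d. samples of $X_i$: $\hat\mu_i^A=\frac{1}{|S_i^A|}\sum_{s\in S_i^A}s$, $\hat\mu_i^B=\frac{1}{|S_i^B|}\sum_{s\in S_i^B}s$. *)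

theory Defs
  imports "HOL-Probability.Probability"
begin

text \<open>Indices are 0,...,N-1. Ranking of index i w.r.t. the vector b: number of indices
that come strictly before i in the descending order of b (ties in b broken by index).\<close>
definition rankB :: "nat \<Rightarrow> (nat \<Rightarrow> real) \<Rightarrow> nat \<Rightarrow> nat" where
  "rankB N b i = card {j. j < N \<and> (b j > b i \<or> (b j = b i \<and> j < i))}"

definition topK :: "nat \<Rightarrow> (nat \<Rightarrow> real) \<Rightarrow> nat \<Rightarrow> nat set" where
  "topK N b K = {i. i < N \<and> rankB N b i < K}"

definition argmax_set :: "nat \<Rightarrow> (nat \<Rightarrow> real) \<Rightarrow> (nat \<Rightarrow> real) \<Rightarrow> nat \<Rightarrow> nat set" where
  "argmax_set N a b K = {i \<in> topK N b K. \<forall>j \<in> topK N b K. a j \<le> a i}"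

text \<open>Value b_{a*_K} averaged over the uniform random tie-breaking among the maximisers
(i.e. the conditional expectation of b_{a*_K} given the vectors a, b).\<close>
definition sel_value :: "nat \<Rightarrow> (nat \<Rightarrow> real) \<Rightarrow> (nat \<Rightarrow> real) \<Rightarrow> nat \<Rightarrow> real" where
  "sel_value N a b K = (\<Sum>i \<in> argmax_set N a b K. b i) / real (card (argmax_set N a b K))"

end

theory Submission
  imports Defs
begin

lemma rank_lt:
  assumes "i<N" "j<N" "b i > b j \<or> (b i = b j \<and> i < j)"
  shows "rankB N b i < rankB N b j"
proof -
  have "{k. k < N \<and> (b k > b i \<or> (b k = b i \<and> k < i))} \<subset> {k. k < N \<and> (b k > b j \<or> (b k = b j \<and> k < j))}"
    using assms by auto
  moreover have "finite {k. k < N \<and> (b k > b j \<or> (b k = b j \<and> k < j))}" by auto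
  ultimately show ?thesis unfolding rankB_def by (rule psubset_card_mono[rotated])
qed

lemma rank_bound: "i<N \<Longrightarrow> rankB N b i < N"
proof -
  assume i: "i<N"
  have "{j. j < N \<and> (b j > b i \<or> (b j = b i \<and> j < i))} \<subset> {..<N}" using i by auto
  then show ?thesis unfolding rankB_def by (metis card_lessThan finite_lessThan psubset_card_mono)
qed

lemma rank_inj: "inj_on (rankB N b) {..<N}"
proof (rule inj_onI)
  fix i j assume "i \<in> {..<N}" "j \<in> {..<N}" "rankB N b i = rankB N b j"
  then show "i = j" using rank_lt[of i N j b] rank_lt[of j N i b]
    by (metis lessThan_iff linorder_neqE_linordered_idom linorder_neqE_nat less_irrefl)
qed

lemma rank_surj: "rankB N b ` {..<N} = {..<N}"
  apply (rule card_subset_eq)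
  using rank_bound apply auto[2]
  using card_image[OF rank_inj[of N b]] by simp

lemma avg_ge:
  assumes "finite A" "A \<noteq> {}" "\<forall>i\<in>A. c \<le> b i"
  shows "c \<le> (\<Sum>i\<in>A. b i) / real (card A)"
proof -
  have "real (card A) * c \<le> (\<Sum>i\<in>A. b i)" using sum_bounded_below[of A c b] assms by auto
  moreover have "card A > 0" using assms by auto
  ultimately show ?thesis by (simp add: field_simps)
qed

lemma am1:
  fixes a :: "nat \<Rightarrow> real"
  assumes "\<forall>j\<in>T. a j \<le> m" "m < a x"
  shows "{i\<in>insert x T. \<forall>j\<in>insert x T. a j \<le> a i} = {x}"
proof -
  have "\<forall>j\<in>T. a j \<le> a x" using assms by (meson less_imp_le order_trans)
  moreover have "\<forall>i\<in>T. \<not> a x \<le> a i" using assms by (meson leD le_less_trans)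
  ultimately show ?thesis by auto
qed
lemma am2:
  fixes a :: "nat \<Rightarrow> real"
  assumes "\<forall>j\<in>T. a j \<le> m" "j0 \<in> T" "a j0 = m" "a x < m"
  shows "{i\<in>insert x T. \<forall>j\<in>insert x T. a j \<le> a i} = {i\<in>T. a i = m}"
proof (rule set_eqI, rule iffI)
  fix i assume "i \<in> {i\<in>insert x T. \<forall>j\<in>insert x T. a j \<le> a i}"
  then have i: "i \<in> insert x T" "a j0 \<le> a i" using assms(2) by auto
  then have "i \<noteq> x" using assms by auto
  then show "i \<in> {i\<in>T. a i = m}" using i assms by force
next
  fix i assume "i \<in> {i\<in>T. a i = m}"
  then show "i \<in> {i\<in>insert x T. \<forall>j\<in>insert x T. a j \<le> a i}" using assms by auto
qed
lemma am3:
  fixes a :: "nat \<Rightarrow> real"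
  assumes "\<forall>j\<in>T. a j \<le> m" "j0 \<in> T" "a j0 = m" "a x = m"
  shows "{i\<in>insert x T. \<forall>j\<in>insert x T. a j \<le> a i} = insert x {i\<in>T. a i = m}"
proof (rule set_eqI, rule iffI)
  fix i assume "i \<in> {i\<in>insert x T. \<forall>j\<in>insert x T. a j \<le> a i}"
  then have i: "i \<in> insert x T" "a j0 \<le> a i" using assms(2) by auto
  then show "i \<in> insert x {i\<in>T. a i = m}" using i assms by force
next
  fix i assume "i \<in> insert x {i\<in>T. a i = m}"
  then show "i \<in> {i\<in>insert x T. \<forall>j\<in>insert x T. a j \<le> a i}" using assms by auto
qed

lemma pointwise:
  assumes "1 \<le> K" "K < N"
  shows "sel_value N a b (Suc K) \<le> sel_value N a b K"
proof -
  have "K \<in> rankB N b ` {..<N}" using rank_surj[of N b] assms by simp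
  then obtain x where x: "x < N" "rankB N b x = K" by auto
  have "0 \<in> rankB N b ` {..<N}" using rank_surj[of N b] assms by simp
  then obtain y where y: "y < N" "rankB N b y = 0" by auto
  define T where "T = topK N b K"
  have T': "topK N b (Suc K) = insert x T"
  proof (rule set_eqI)
    fix i
    show "i \<in> topK N b (Suc K) \<longleftrightarrow> i \<in> insert x T"
    proof
      assume i: "i \<in> topK N b (Suc K)"
      then have i1: "i < N" "rankB N b i < Suc K" unfolding topK_def by auto
      show "i \<in> insert x T"
      proof (cases "rankB N b i < K")
        case True then show ?thesis using i1 unfolding T_def topK_def by simp
      next
        case False
        then have "rankB N b i = rankB N b x" using i1 x by simp
        then have "i = x" using inj_onD[OF rank_inj[of N b]] i1 x by simp
        then show ?thesis by simp
      qed
    next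
      assume "i \<in> insert x T"
      then show "i \<in> topK N b (Suc K)" using x unfolding T_def topK_def by auto
    qed
  qed
  have xT: "x \<notin> T" using x unfolding T_def topK_def by auto
  have finT: "finite T" unfolding T_def topK_def by auto
  have yT: "y \<in> T" using y assms unfolding T_def topK_def by auto
  have bx: "\<forall>i\<in>T. b x \<le> b i"
  proof
    fix i assume i: "i \<in> T"
    then have "i < N" "rankB N b i < K" unfolding T_def topK_def by auto
    show "b x \<le> b i"
    proof (rule ccontr)
      assume "\<not> b x \<le> b i"
      then have "rankB N b x < rankB N b i" using rank_lt[of x N i b] x \<open>i < N\<close> by simp
      then show False using x \<open>rankB N b i < K\<close> by simp
    qed
  qed
  define m where "m = Max (a ` T)"
  have mT: "m \<in> a ` T" unfolding m_def using finT yT by (intro Max_in) auto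
  have mge: "\<forall>i\<in>T. a i \<le> m" unfolding m_def using finT by auto
  obtain j0 where j0: "j0 \<in> T" "a j0 = m" using mT by auto
  define A where "A = {i\<in>T. a i = m}"
  have A: "argmax_set N a b K = A" unfolding argmax_set_def A_def T_def[symmetric]
    using j0 mge by (auto intro: order.antisym)
  have finA: "finite A" "A \<noteq> {}" using finT mT unfolding A_def by auto
  have bxA: "\<forall>i\<in>A. b x \<le> b i" using bx unfolding A_def by auto
  have selK: "sel_value N a b K = (\<Sum>i\<in>A. b i) / real (card A)"
    unfolding sel_value_def A ..
  have ge: "b x \<le> sel_value N a b K" unfolding selK by (rule avg_ge[OF finA bxA])
  consider "a x > m" | "a x < m" | "a x = m" by linarith
  then show ?thesis
  proof cases
    case 1
    have "argmax_set N a b (Suc K) = {x}" unfolding argmax_set_def T'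
      using am1[OF mge 1] .
    then show ?thesis using ge unfolding sel_value_def by simp
  next
    case 2
    have "argmax_set N a b (Suc K) = A" unfolding argmax_set_def T' A_def
      using am2[OF mge j0 2] .
    then show ?thesis unfolding sel_value_def A by simp
  next
    case 3
    have eq: "argmax_set N a b (Suc K) = insert x A" unfolding argmax_set_def T' A_def
      using am3[OF mge j0 3] .
    have xA: "x \<notin> A" using xT unfolding A_def by auto
    define S where "S = (\<Sum>i\<in>A. b i)"
    define n where "n = real (card A)"
    have n: "n > 0" using finA unfolding n_def by auto
    have g: "b x \<le> S / n" using ge unfolding selK S_def n_def .
    have "sel_value N a b (Suc K) = (S + b x) / (n + 1)"
      unfolding sel_value_def eq S_def n_def using finA xA by (simp add: add.commute)
    also have "\<dots> \<le> S / n" using n g by (simp add: field_simps)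
    finally show ?thesis unfolding selK S_def n_def .
  qed
qed

lemma card_as_sum: "real (card {j. j < (N::nat) \<and> P j}) = (\<Sum>j\<in>{..<N}. if P j then 1 else 0)"
proof -
  have e: "{j. j < N \<and> P j} = {j\<in>{..<N}. P j}" by auto
  show ?thesis unfolding e real_of_card by (rule sum.inter_filter) (rule finite_lessThan)
qed

lemma sel_alt:
  "sel_value N a b K = (\<Sum>i\<in>{..<N}. if i \<in> argmax_set N a b K then b i else 0) /
     (\<Sum>i\<in>{..<N}. if i \<in> argmax_set N a b K then 1 else 0)"
proof -
  have s: "argmax_set N a b K = {i\<in>{..<N}. i \<in> argmax_set N a b K}"
    unfolding argmax_set_def topK_def by auto
  have "(\<Sum>i\<in>argmax_set N a b K. b i) = (\<Sum>i\<in>{..<N}. if i \<in> argmax_set N a b K then b i else 0)"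
    by (subst s, rule sum.inter_filter) simp
  moreover have "real (card (argmax_set N a b K)) = (\<Sum>i\<in>{..<N}. if i \<in> argmax_set N a b K then 1 else 0)"
    by (subst s, subst sum.inter_filter[symmetric]) simp_all
  ultimately show ?thesis unfolding sel_value_def by simp
qed

lemma mem_iff:
  "i \<in> argmax_set N a b K \<longleftrightarrow> i < N \<and>
    (\<Sum>j\<in>{..<N}. if b j > b i \<or> (b j = b i \<and> j < i) then 1 else 0) < real K \<and>
    (\<forall>j\<in>{..<N}. (\<Sum>k\<in>{..<N}. if b k > b j \<or> (b k = b j \<and> k < j) then 1 else 0) < real K \<longrightarrow> a j \<le> a i)"
  unfolding argmax_set_def topK_def rankB_def card_as_sum[symmetric] by auto

lemma sel_measurable:
  assumes mA: "\<And>i. i < N \<Longrightarrow> (\<lambda>\<omega>. muA \<omega> i) \<in> borel_measurable M"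
    and mB: "\<And>i. i < N \<Longrightarrow> (\<lambda>\<omega>. muB \<omega> i) \<in> borel_measurable M"
  shows "(\<lambda>\<omega>. sel_value N (muA \<omega>) (muB \<omega>) K) \<in> borel_measurable M"
proof -
  define rk where "rk = (\<lambda>\<omega> j. (\<Sum>k\<in>{..<N}. if muB \<omega> k > muB \<omega> j \<or> (muB \<omega> k = muB \<omega> j \<and> k < j) then 1 else (0::real)))"
  have rk: "(\<lambda>\<omega>. rk \<omega> j) \<in> borel_measurable M" if j: "j < N" for j
    unfolding rk_def
  proof (rule borel_measurable_sum)
    fix k assume "k \<in> {..<N}"
    then have [measurable]: "(\<lambda>\<omega>. muB \<omega> k) \<in> borel_measurable M" "(\<lambda>\<omega>. muB \<omega> j) \<in> borel_measurable M"
      using mB j by auto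
    show "(\<lambda>\<omega>. if muB \<omega> k > muB \<omega> j \<or> (muB \<omega> k = muB \<omega> j \<and> k < j) then 1 else (0::real)) \<in> borel_measurable M"
      by measurable
  qed
  have inT: "(\<lambda>\<omega>. rk \<omega> j < real K) \<in> measurable M (count_space UNIV)" if "j < N" for j
  proof -
    note [measurable] = rk[OF that]
    show ?thesis by measurable
  qed
  have mem: "(\<lambda>\<omega>. i \<in> argmax_set N (muA \<omega>) (muB \<omega>) K) \<in> measurable M (count_space UNIV)" if i: "i < N" for i
  proof -
    have "(\<lambda>\<omega>. rk \<omega> j < real K \<longrightarrow> muA \<omega> j \<le> muA \<omega> i) \<in> measurable M (count_space UNIV)" if "j \<in> {..<N}" for j
    proof -
      have jN: "j < N" using that by simp
      note [measurable] = inT[OF jN] mA[OF jN] mA[OF i]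
      show ?thesis by measurable
    qed
    then have f1: "(\<lambda>\<omega>. \<forall>j\<in>{..<N}. rk \<omega> j < real K \<longrightarrow> muA \<omega> j \<le> muA \<omega> i) \<in> measurable M (count_space UNIV)"
      by (rule pred_intros_finite(3)[OF finite_lessThan])
    have "(\<lambda>\<omega>. rk \<omega> i < real K \<and> (\<forall>j\<in>{..<N}. rk \<omega> j < real K \<longrightarrow> muA \<omega> j \<le> muA \<omega> i)) \<in> measurable M (count_space UNIV)"
      using inT[OF i] f1 by (rule pred_intros_logic(3))
    moreover have "(\<lambda>\<omega>. i \<in> argmax_set N (muA \<omega>) (muB \<omega>) K) = (\<lambda>\<omega>. rk \<omega> i < real K \<and> (\<forall>j\<in>{..<N}. rk \<omega> j < real K \<longrightarrow> muA \<omega> j \<le> muA \<omega> i))"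
    proof (rule ext)
      fix \<omega>
      show "(i \<in> argmax_set N (muA \<omega>) (muB \<omega>) K) = (rk \<omega> i < real K \<and> (\<forall>j\<in>{..<N}. rk \<omega> j < real K \<longrightarrow> muA \<omega> j \<le> muA \<omega> i))"
        unfolding mem_iff rk_def using i by blast
    qed
    ultimately show ?thesis by simp
  qed
  have num: "(\<lambda>\<omega>. \<Sum>i\<in>{..<N}. if i \<in> argmax_set N (muA \<omega>) (muB \<omega>) K then muB \<omega> i else 0) \<in> borel_measurable M"
  proof (rule borel_measurable_sum)
    fix i assume "i \<in> {..<N}"
    then have i: "i < N" by simp
    show "(\<lambda>\<omega>. if i \<in> argmax_set N (muA \<omega>) (muB \<omega>) K then muB \<omega> i else 0) \<in> borel_measurable M"
      by (rule measurable_If[OF mB[OF i] _ predE[OF mem[OF i]]]) simp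
  qed
  have den: "(\<lambda>\<omega>. \<Sum>i\<in>{..<N}. if i \<in> argmax_set N (muA \<omega>) (muB \<omega>) K then 1 else (0::real)) \<in> borel_measurable M"
  proof (rule borel_measurable_sum)
    fix i assume "i \<in> {..<N}"
    then have i: "i < N" by simp
    show "(\<lambda>\<omega>. if i \<in> argmax_set N (muA \<omega>) (muB \<omega>) K then 1 else (0::real)) \<in> borel_measurable M"
      by (rule measurable_If[OF _ _ predE[OF mem[OF i]]]) simp_all
  qed
  show ?thesis unfolding sel_alt using num den by (rule borel_measurable_divide)
qed

lemma sel_bound: "\<bar>sel_value N a b K\<bar> \<le> (\<Sum>i\<in>{..<N}. \<bar>b i\<bar>)"
proof -
  let ?A = "argmax_set N a b K"
  have sub: "?A \<subseteq> {..<N}" unfolding argmax_set_def topK_def by auto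
  show ?thesis
  proof (cases "?A = {}")
    case True then show ?thesis unfolding sel_value_def by (simp add: sum_nonneg)
  next
    case False
    have fin: "finite ?A" using sub finite_subset by blast
    have c: "card ?A \<ge> 1" using fin False by (simp add: Suc_leI card_gt_0_iff)
    have "\<bar>sel_value N a b K\<bar> = \<bar>\<Sum>i\<in>?A. b i\<bar> / real (card ?A)" unfolding sel_value_def by simp
    also have "\<dots> \<le> \<bar>\<Sum>i\<in>?A. b i\<bar>" using c by (simp add: divide_le_eq mult_le_cancel_left1)
    also have "\<dots> \<le> (\<Sum>i\<in>?A. \<bar>b i\<bar>)" by (rule sum_abs)
    also have "\<dots> \<le> (\<Sum>i\<in>{..<N}. \<bar>b i\<bar>)" by (rule sum_mono2) (use sub in auto)
    finally show ?thesis .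
  qed
qed

lemma sel_integrable:
  assumes "\<forall>i<N. integrable M (\<lambda>\<omega>. muA \<omega> i)"
    and "\<forall>i<N. integrable M (\<lambda>\<omega>. muB \<omega> i)"
  shows "integrable M (\<lambda>\<omega>. sel_value N (muA \<omega>) (muB \<omega>) K)"
proof (rule Bochner_Integration.integrable_bound)
  show "integrable M (\<lambda>\<omega>. \<Sum>i\<in>{..<N}. \<bar>muB \<omega> i\<bar>)"
    using assms(2) by (intro Bochner_Integration.integrable_sum integrable_abs) auto
  show "(\<lambda>\<omega>. sel_value N (muA \<omega>) (muB \<omega>) K) \<in> borel_measurable M"
    using assms by (intro sel_measurable) auto
  show "AE \<omega> in M. norm (sel_value N (muA \<omega>) (muB \<omega>) K) \<le> norm (\<Sum>i\<in>{..<N}. \<bar>muB \<omega> i\<bar>)"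
    using sel_bound by (simp add: sum_nonneg)
qed

theorem mainTheorem1:
  fixes M :: "'s measure" and muA muB :: "'s \<Rightarrow> nat \<Rightarrow> real" and N K :: nat
  assumes "prob_space M"
    and "N \<ge> 2"
    and "\<forall>i<N. integrable M (\<lambda>\<omega>. muA \<omega> i)"
    and "\<forall>i<N. integrable M (\<lambda>\<omega>. muB \<omega> i)"
    and "1 \<le> K" and "K < N"
  shows "(\<integral>\<omega>. sel_value N (muA \<omega>) (muB \<omega>) K \<partial>M)
           \<ge> (\<integral>\<omega>. sel_value N (muA \<omega>) (muB \<omega>) (Suc K) \<partial>M)"
  by (rule integral_mono[OF sel_integrable[OF assms(3,4)] sel_integrable[OF assms(3,4)]])
     (rule pointwise[OF assms(5,6)])

end
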